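(* Let $(K,\mathscr T)$ be a stable topological space and $f:K\to L^0$ a stable lower semi-continuous function. If $K$ is stable compact, then there exists $x_0\in K$ such that $f(x_0)=\min_{x\in K}f(x)$, i.e. $f(x_0)\le f(x)$ for all $x\in K$.
   Context: $L^0$: real measurable functions on a probability space modulo a.e. equality, a.e. order; $\bar L^0$ the corresponding extended-real-valued classes. An $L^0$-module $E$ is stable if for every countable measurable partition $(A_k)$ and $(x_k)\subset E$ there is a unique $x=\sum_k1_{A_k}x_k$ with $1_{A_k}x=1_{A_k}x_k$. A nonempty subset is stable if closed under concatenations; for stable $Y_k$, $\sum_k1_{A_k}Y_k=\{\sum_k1_{A_k}y_k:y_k\in Y_k\}$; a nonempty collection of stable sets is stable if closed under this operation. A stable topological space is a stable subset $K$ of a stable $L^0$-module with a topology having a base which is a stable collection of stable sets. $f$ is stable if $f(\sum_k1_{A_k}x_k)=\sum_k1_{A_k}f(x_k)$; lower semi-continuous if $\{x\in K:f(x)\le\eta\}$ is closed for every $\eta\in\bar L^0$. A filter is stable if it has a filter base which is a stable collection of stable sets; $K$ is stable compact if every stable filter on $K$ has a cluster point in $K$. *)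

theory Defs
  imports "HOL-Probability.Probability"
begin

text \<open>Elements of L0 are represented by real-valued measurable functions on the
probability space M; equalities and inequalities between them are read almost everywhere.\<close>

definition meas_partition :: "'w measure \<Rightarrow> (nat \<Rightarrow> 'w set) \<Rightarrow> bool" where
  "meas_partition M A \<longleftrightarrow>
     (\<forall>k. A k \<in> sets M) \<and> disjoint_family A \<and> (\<Union>k. A k) = space M"

definition L0_module :: "'w measure \<Rightarrow> 'e::ab_group_add set \<Rightarrow> (('w \<Rightarrow> real) \<Rightarrow> 'e \<Rightarrow> 'e) \<Rightarrow> bool" where
  "L0_module M E sm \<longleftrightarrow>
     0 \<in> E \<and> (\<forall>x\<in>E. \<forall>y\<in>E. x + y \<in> E \<and> - x \<in> E) \<and>
     (\<forall>f\<in>borel_measurable M. \<forall>x\<in>E. sm f x \<in> E) \<and>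
     (\<forall>f\<in>borel_measurable M. \<forall>g\<in>borel_measurable M. \<forall>x\<in>E.
        sm (\<lambda>w. f w + g w) x = sm f x + sm g x \<and> sm (\<lambda>w. f w * g w) x = sm f (sm g x)) \<and>
     (\<forall>f\<in>borel_measurable M. \<forall>x\<in>E. \<forall>y\<in>E. sm f (x + y) = sm f x + sm f y) \<and>
     (\<forall>x\<in>E. sm (\<lambda>w. 1) x = x) \<and>
     (\<forall>f\<in>borel_measurable M. \<forall>g\<in>borel_measurable M.
        (AE w in M. f w = g w) \<longrightarrow> (\<forall>x\<in>E. sm f x = sm g x))"

definition stable_module :: "'w measure \<Rightarrow> 'e::ab_group_add set \<Rightarrow> (('w \<Rightarrow> real) \<Rightarrow> 'e \<Rightarrow> 'e) \<Rightarrow> bool" where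
  "stable_module M E sm \<longleftrightarrow> L0_module M E sm \<and>
     (\<forall>A xs. meas_partition M A \<and> (\<forall>k. xs k \<in> E) \<longrightarrow>
        (\<exists>!x. x \<in> E \<and> (\<forall>k. sm (indicator (A k)) x = sm (indicator (A k)) (xs k))))"

text \<open>The concatenation sum_k 1_{A_k} x_k.\<close>
definition conc :: "'w measure \<Rightarrow> 'e::ab_group_add set \<Rightarrow> (('w \<Rightarrow> real) \<Rightarrow> 'e \<Rightarrow> 'e)
    \<Rightarrow> (nat \<Rightarrow> 'w set) \<Rightarrow> (nat \<Rightarrow> 'e) \<Rightarrow> 'e" where
  "conc M E sm A xs = (THE x. x \<in> E \<and> (\<forall>k. sm (indicator (A k)) x = sm (indicator (A k)) (xs k)))"

definition stable_set :: "'w measure \<Rightarrow> 'e::ab_group_add set \<Rightarrow> (('w \<Rightarrow> real) \<Rightarrow> 'e \<Rightarrow> 'e) \<Rightarrow> 'e set \<Rightarrow> bool" where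
  "stable_set M E sm S \<longleftrightarrow> S \<noteq> {} \<and> S \<subseteq> E \<and>
     (\<forall>A xs. meas_partition M A \<and> (\<forall>k. xs k \<in> S) \<longrightarrow> conc M E sm A xs \<in> S)"

definition stable_coll :: "'w measure \<Rightarrow> 'e::ab_group_add set \<Rightarrow> (('w \<Rightarrow> real) \<Rightarrow> 'e \<Rightarrow> 'e) \<Rightarrow> 'e set set \<Rightarrow> bool" where
  "stable_coll M E sm C \<longleftrightarrow> C \<noteq> {} \<and> (\<forall>S\<in>C. stable_set M E sm S) \<and>
     (\<forall>A Y. meas_partition M A \<and> (\<forall>k. Y k \<in> C) \<longrightarrow>
        {conc M E sm A ys | ys. \<forall>k. ys k \<in> Y k} \<in> C)"

definition stable_top_space :: "'w measure \<Rightarrow> 'e::ab_group_add set \<Rightarrow> (('w \<Rightarrow> real) \<Rightarrow> 'e \<Rightarrow> 'e)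
    \<Rightarrow> 'e set \<Rightarrow> 'e topology \<Rightarrow> bool" where
  "stable_top_space M E sm K T \<longleftrightarrow> stable_module M E sm \<and> stable_set M E sm K \<and> topspace T = K \<and>
     (\<exists>B. stable_coll M E sm B \<and> (\<forall>U\<in>B. openin T U) \<and>
          (\<forall>U. openin T U \<longrightarrow> (\<exists>B'. B' \<subseteq> B \<and> \<Union>B' = U)))"

definition stable_filter :: "'w measure \<Rightarrow> 'e::ab_group_add set \<Rightarrow> (('w \<Rightarrow> real) \<Rightarrow> 'e \<Rightarrow> 'e)
    \<Rightarrow> 'e set \<Rightarrow> 'e filter \<Rightarrow> bool" where
  "stable_filter M E sm K F \<longleftrightarrow> eventually (\<lambda>x. x \<in> K) F \<and>
     (\<exists>B. stable_coll M E sm B \<and> (\<forall>b\<in>B. eventually (\<lambda>x. x \<in> b) F) \<and>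
          (\<forall>U. eventually (\<lambda>x. x \<in> U) F \<longrightarrow> (\<exists>b\<in>B. b \<subseteq> U)))"

definition cluster_pt :: "'e topology \<Rightarrow> 'e filter \<Rightarrow> 'e \<Rightarrow> bool" where
  "cluster_pt T F x \<longleftrightarrow> x \<in> topspace T \<and>
     (\<forall>U A. openin T U \<and> x \<in> U \<and> eventually (\<lambda>y. y \<in> A) F \<longrightarrow> U \<inter> A \<noteq> {})"

definition stable_compact :: "'w measure \<Rightarrow> 'e::ab_group_add set \<Rightarrow> (('w \<Rightarrow> real) \<Rightarrow> 'e \<Rightarrow> 'e)
    \<Rightarrow> 'e set \<Rightarrow> 'e topology \<Rightarrow> bool" where
  "stable_compact M E sm K T \<longleftrightarrow>
     (\<forall>F. stable_filter M E sm K F \<longrightarrow> (\<exists>x\<in>K. cluster_pt T F x))"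

text \<open>Stability of f : K \<rightarrow> L0: f(sum 1_{A_k} x_k) = sum 1_{A_k} f(x_k), i.e.
1_{A_k} f(x) = 1_{A_k} f(x_k) a.e. for every k.\<close>
definition stable_fun :: "'w measure \<Rightarrow> 'e::ab_group_add set \<Rightarrow> (('w \<Rightarrow> real) \<Rightarrow> 'e \<Rightarrow> 'e)
    \<Rightarrow> 'e set \<Rightarrow> ('e \<Rightarrow> 'w \<Rightarrow> real) \<Rightarrow> bool" where
  "stable_fun M E sm K f \<longleftrightarrow>
     (\<forall>A xs. meas_partition M A \<and> (\<forall>k. xs k \<in> K) \<longrightarrow>
        (\<forall>k. AE w in M. w \<in> A k \<longrightarrow> f (conc M E sm A xs) w = f (xs k) w))"

definition lsc_L0 :: "'w measure \<Rightarrow> 'e set \<Rightarrow> 'e topology \<Rightarrow> ('e \<Rightarrow> 'w \<Rightarrow> real) \<Rightarrow> bool" where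
  "lsc_L0 M K T f \<longleftrightarrow>
     (\<forall>\<eta> :: 'w \<Rightarrow> ereal. \<eta> \<in> borel_measurable M \<longrightarrow>
        closedin T {x \<in> K. AE w in M. ereal (f x w) \<le> \<eta> w})"

end

theory Submission
  imports Defs
begin

lemma conc_prop:
  assumes "stable_module M E sm" "meas_partition M A" "\<forall>k. xs k \<in> E"
  shows "conc M E sm A xs \<in> E \<and> (\<forall>k. sm (indicator (A k)) (conc M E sm A xs) = sm (indicator (A k)) (xs k))"
proof -
  from assms have ex: "\<exists>!x. x \<in> E \<and> (\<forall>k. sm (indicator (A k)) x = sm (indicator (A k)) (xs k))"
    unfolding stable_module_def by blast
  show ?thesis unfolding conc_def by (rule theI'[OF ex])
qed

lemma conc_eq:
  assumes "stable_module M E sm" "meas_partition M A" "\<forall>k. xs k \<in> E" "x \<in> E"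
    "\<forall>k. sm (indicator (A k)) x = sm (indicator (A k)) (xs k)"
  shows "conc M E sm A xs = x"
proof -
  from assms have ex: "\<exists>!x. x \<in> E \<and> (\<forall>k. sm (indicator (A k)) x = sm (indicator (A k)) (xs k))"
    unfolding stable_module_def by blast
  show ?thesis unfolding conc_def by (rule the1_equality[OF ex]) (use assms in auto)
qed

definition part2 :: "'w measure \<Rightarrow> 'w set \<Rightarrow> nat \<Rightarrow> 'w set" where
  "part2 M C = (\<lambda>k. if k = 0 then C else if k = 1 then space M - C else {})"

lemma part2_partition:
  assumes "C \<in> sets M" shows "meas_partition M (part2 M C)"
proof -
  have "C \<subseteq> space M" using assms sets.sets_into_space by auto
  moreover have "(\<Union>k. part2 M C k) = C \<union> (space M - C)"
  proof
    show "(\<Union>k. part2 M C k) \<subseteq> C \<union> (space M - C)" by (auto simp: part2_def split: if_splits)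
    show "C \<union> (space M - C) \<subseteq> (\<Union>k. part2 M C k)"
    proof
      fix w assume "w \<in> C \<union> (space M - C)"
      then show "w \<in> (\<Union>k. part2 M C k)"
        by (cases "w \<in> C") (auto simp: part2_def intro!: exI[of _ 0] exI[of _ 1])
    qed
  qed
  moreover have "disjoint_family (part2 M C)"
    unfolding disjoint_family_on_def part2_def by auto
  moreover have "\<forall>k. part2 M C k \<in> sets M" using assms by (auto simp: part2_def)
  ultimately show ?thesis unfolding meas_partition_def by auto
qed

lemma part2_0: "part2 M C 0 = C" and part2_1: "part2 M C (Suc 0) = space M - C"
  by (auto simp: part2_def)

lemma space_cover:
  assumes "meas_partition M A" "w \<in> space M" shows "\<exists>k. w \<in> A k"
  using assms unfolding meas_partition_def by auto

theorem theorem5: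
  fixes M :: "'w measure" and E :: "'e::ab_group_add set"
    and sm :: "('w \<Rightarrow> real) \<Rightarrow> 'e \<Rightarrow> 'e"
    and K :: "'e set" and T :: "'e topology" and f :: "'e \<Rightarrow> 'w \<Rightarrow> real"
  assumes "prob_space M"
    and "stable_top_space M E sm K T"
    and "\<forall>x\<in>K. f x \<in> borel_measurable M"
    and "stable_fun M E sm K f"
    and "lsc_L0 M K T f"
    and "stable_compact M E sm K T"
  shows "\<exists>x0\<in>K. \<forall>x\<in>K. AE w in M. f x0 w \<le> f x w"
proof -
  have SM: "stable_module M E sm" and SK: "stable_set M E sm K" and top: "topspace T = K"
    using assms(2) unfolding stable_top_space_def by auto
  have KE: "K \<subseteq> E" and Kne: "K \<noteq> {}" using SK unfolding stable_set_def by auto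
  have Kconc: "conc M E sm A xs \<in> K" if "meas_partition M A" "\<forall>k. xs k \<in> K" for A xs
    using SK that unfolding stable_set_def by auto
  have SF: "AE w in M. w \<in> A k \<longrightarrow> f (conc M E sm A xs) w = f (xs k) w"
    if "meas_partition M A" "\<forall>k. xs k \<in> K" for A xs k
    using assms(4) that unfolding stable_fun_def by auto
  have meas: "f x \<in> borel_measurable M" if "x \<in> K" for x using assms(3) that by auto
  have cmp: "AE w in M. f (conc M E sm A xs) w \<le> f (conc M E sm A ys) w"
    if P: "meas_partition M A" and xs: "\<forall>k. xs k \<in> K" and ys: "\<forall>k. ys k \<in> K"
      and le: "\<forall>k. AE w in M. w \<in> A k \<longrightarrow> f (xs k) w \<le> f (ys k) w" for A xs ys
  proof -
    have "\<forall>k. AE w in M. w \<in> A k \<longrightarrow> f (conc M E sm A xs) w \<le> f (conc M E sm A ys) w"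
    proof
      fix k
      from SF[OF P xs, of k] SF[OF P ys, of k] le[rule_format, of k]
      show "AE w in M. w \<in> A k \<longrightarrow> f (conc M E sm A xs) w \<le> f (conc M E sm A ys) w"
        by eventually_elim auto
    qed
    then have "AE w in M. \<forall>k. w \<in> A k \<longrightarrow> f (conc M E sm A xs) w \<le> f (conc M E sm A ys) w"
      by (subst AE_all_countable) simp
    then show ?thesis
    proof (rule AE_mp[OF _ AE_I2], intro impI)
      fix w assume w: "w \<in> space M" and h: "\<forall>k. w \<in> A k \<longrightarrow> f (conc M E sm A xs) w \<le> f (conc M E sm A ys) w"
      from space_cover[OF P w] h show "f (conc M E sm A xs) w \<le> f (conc M E sm A ys) w" by auto
    qed
  qed
  define S where "S y = {x\<in>K. AE w in M. f x w \<le> f y w}" for y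
  define B where "B = S ` K"
  have SsubK: "S y \<subseteq> K" for y unfolding S_def by auto
  have yS: "y \<in> S y" if "y \<in> K" for y unfolding S_def using that by auto
  have Sstable: "stable_set M E sm (S y)" if y: "y \<in> K" for y
  proof -
    have "conc M E sm A xs \<in> S y" if P: "meas_partition M A" and xs: "\<forall>k. xs k \<in> S y" for A xs
    proof -
      have xK: "\<forall>k. xs k \<in> K" using xs SsubK by auto
      have "AE w in M. f (conc M E sm A xs) w \<le> f (conc M E sm A (\<lambda>_. y)) w"
        by (rule cmp[OF P xK]) (use y xs in \<open>auto simp: S_def elim: AE_mp\<close>)
      moreover have "conc M E sm A (\<lambda>_. y) = y"
        by (rule conc_eq[OF SM P]) (use y KE in auto)
      ultimately show ?thesis using Kconc[OF P xK] unfolding S_def by auto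
    qed
    then show ?thesis unfolding stable_set_def using yS[OF y] SsubK KE by blast
  qed
  have Bcoll: "stable_coll M E sm B"
  proof -
    have "{conc M E sm A ys | ys. \<forall>k. ys k \<in> Y k} \<in> B"
      if P: "meas_partition M A" and Y: "\<forall>k. Y k \<in> B" for A Y
    proof -
      from Y have "\<forall>k. \<exists>y. y \<in> K \<and> Y k = S y" unfolding B_def by blast
      then obtain yy where yy: "\<forall>k. yy k \<in> K \<and> Y k = S (yy k)"
        by metis
      have yK: "\<forall>k. yy k \<in> K" using yy by auto
      define y where "y = conc M E sm A yy"
      have y: "y \<in> K" using Kconc[OF P yK] y_def by simp
      have "{conc M E sm A ys | ys. \<forall>k. ys k \<in> Y k} = S y"
      proof
        show "{conc M E sm A ys | ys. \<forall>k. ys k \<in> Y k} \<subseteq> S y"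
        proof clarify
          fix ys assume ys: "\<forall>k. ys k \<in> Y k"
          have ysK: "\<forall>k. ys k \<in> K" using ys yy SsubK by blast
          have "AE w in M. f (conc M E sm A ys) w \<le> f (conc M E sm A yy) w"
            by (rule cmp[OF P ysK yK]) (use ys yy in \<open>auto simp: S_def elim: AE_mp\<close>)
          then show "conc M E sm A ys \<in> S y" using Kconc[OF P ysK] unfolding S_def y_def by auto
        qed
        show "S y \<subseteq> {conc M E sm A ys | ys. \<forall>k. ys k \<in> Y k}"
        proof
          fix x assume x: "x \<in> S y"
          have xK: "x \<in> K" using x SsubK by auto
          define zz where "zz k = (\<lambda>j::nat. if j = 0 then x else yy k)" for k
          define xs where "xs k = conc M E sm (part2 M (A k)) (zz k)" for k
          have Ak: "A k \<in> sets M" for k using P unfolding meas_partition_def by auto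
          have P2: "meas_partition M (part2 M (A k))" for k by (rule part2_partition[OF Ak])
          have zzK: "\<forall>j. zz k j \<in> K" for k using xK yK by (auto simp: zz_def)
          have xsK: "xs k \<in> K" for k unfolding xs_def by (rule Kconc[OF P2 zzK])
          have "xs k \<in> Y k" for k
          proof -
            have e0: "AE w in M. w \<in> A k \<longrightarrow> f (xs k) w = f x w"
              using SF[OF P2[of k] zzK[of k], of 0] by (simp add: xs_def zz_def part2_0)
            have e1: "AE w in M. w \<in> space M - A k \<longrightarrow> f (xs k) w = f (yy k) w"
              using SF[OF P2[of k] zzK[of k], of 1] by (simp add: xs_def zz_def part2_1)
            have e2: "AE w in M. w \<in> A k \<longrightarrow> f y w = f (yy k) w"
              using SF[OF P yK, of k] by (simp add: y_def)
            have e3: "AE w in M. f x w \<le> f y w" using x unfolding S_def by auto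
            have "AE w in M. f (xs k) w \<le> f (yy k) w"
              using e0 e1 e2 e3 AE_space by eventually_elim auto
            then show ?thesis using yy xsK unfolding S_def by auto
          qed
          moreover have "conc M E sm A xs = x"
          proof (rule conc_eq[OF SM P])
            show "\<forall>k. xs k \<in> E" using xsK KE by auto
            show "x \<in> E" using xK KE by auto
            show "\<forall>k. sm (indicator (A k)) x = sm (indicator (A k)) (xs k)"
            proof
              fix k
              have "\<forall>j. zz k j \<in> E" using zzK KE by blast
              from conc_prop[OF SM P2 this] have
                "sm (indicator (part2 M (A k) 0)) (xs k) = sm (indicator (part2 M (A k) 0)) (zz k 0)"
                unfolding xs_def by blast
              then show "sm (indicator (A k)) x = sm (indicator (A k)) (xs k)"
                by (simp add: part2_0 zz_def)
            qed
          qed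
          ultimately show "x \<in> {conc M E sm A ys | ys. \<forall>k. ys k \<in> Y k}" by blast
        qed
      qed
      then show ?thesis unfolding B_def using y by auto
    qed
    moreover have "B \<noteq> {}" using Kne unfolding B_def by auto
    moreover have "\<forall>b\<in>B. stable_set M E sm b" using Sstable unfolding B_def by auto
    ultimately show ?thesis unfolding stable_coll_def by blast
  qed
  have dir: "\<exists>z\<in>K. S z \<subseteq> S y \<inter> S y'" if y: "y \<in> K" and y': "y' \<in> K" for y y'
  proof -
    define C where "C = {w\<in>space M. f y w \<le> f y' w}"
    have C: "C \<in> sets M" unfolding C_def using meas[OF y] meas[OF y'] by measurable
    define zz where "zz = (\<lambda>j::nat. if j = 0 then y else y')"
    have zzK: "\<forall>j. zz j \<in> K" using y y' by (auto simp: zz_def)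
    define z where "z = conc M E sm (part2 M C) zz"
    have P2: "meas_partition M (part2 M C)" by (rule part2_partition[OF C])
    have zK: "z \<in> K" unfolding z_def by (rule Kconc[OF P2 zzK])
    have e0: "AE w in M. w \<in> C \<longrightarrow> f z w = f y w"
      using SF[OF P2 zzK, of 0] by (simp add: z_def zz_def part2_0)
    have e1: "AE w in M. w \<in> space M - C \<longrightarrow> f z w = f y' w"
      using SF[OF P2 zzK, of 1] by (simp add: z_def zz_def part2_1)
    have zle: "AE w in M. f z w \<le> f y w \<and> f z w \<le> f y' w"
      using e0 e1 AE_space by eventually_elim (auto simp: C_def)
    have "S z \<subseteq> S y \<inter> S y'"
    proof
      fix x assume "x \<in> S z"
      then have xK: "x \<in> K" and h: "AE w in M. f x w \<le> f z w" unfolding S_def by auto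
      have "AE w in M. f x w \<le> f y w \<and> f x w \<le> f y' w" using h zle by eventually_elim auto
      then show "x \<in> S y \<inter> S y'" using xK unfolding S_def by (auto elim: AE_mp)
    qed
    then show ?thesis using zK by blast
  qed
  define F where "F = (INF y\<in>K. principal (S y))"
  have evF: "eventually P F \<longleftrightarrow> (\<exists>y\<in>K. \<forall>x\<in>S y. P x)" for P
  proof -
    have "eventually P F \<longleftrightarrow> (\<exists>y\<in>K. eventually P (principal (S y)))"
      unfolding F_def
    proof (rule eventually_INF_base)
      show "K \<noteq> {}" by (rule Kne)
      fix a b assume "a \<in> K" "b \<in> K"
      then show "\<exists>x\<in>K. principal (S x) \<le> inf (principal (S a)) (principal (S b))"
        using dir by (auto simp: inf_principal)
    qed
    then show ?thesis by (simp add: eventually_principal)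
  qed
  have "stable_filter M E sm K F"
    unfolding stable_filter_def
  proof (intro conjI exI[of _ B])
    from Kne obtain y0 where y0: "y0 \<in> K" by blast
    show "eventually (\<lambda>x. x \<in> K) F" unfolding evF using y0 SsubK by blast
    show "stable_coll M E sm B" by (rule Bcoll)
    show "\<forall>b\<in>B. eventually (\<lambda>x. x \<in> b) F"
    proof
      fix b assume "b \<in> B"
      then obtain y where "y \<in> K" "b = S y" unfolding B_def by blast
      then show "eventually (\<lambda>x. x \<in> b) F" unfolding evF by blast
    qed
    show "\<forall>U. eventually (\<lambda>x. x \<in> U) F \<longrightarrow> (\<exists>b\<in>B. b \<subseteq> U)"
    proof (intro allI impI)
      fix U assume "eventually (\<lambda>x. x \<in> U) F"
      then obtain y where "y \<in> K" "\<forall>x\<in>S y. x \<in> U" unfolding evF by blast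
      then show "\<exists>b\<in>B. b \<subseteq> U" unfolding B_def by blast
    qed
  qed
  with assms(6) obtain x0 where x0: "x0 \<in> K" and cl: "cluster_pt T F x0"
    unfolding stable_compact_def by blast
  have "x0 \<in> S y" if y: "y \<in> K" for y
  proof (rule ccontr)
    assume nx: "x0 \<notin> S y"
    have eta: "(\<lambda>w. ereal (f y w)) \<in> borel_measurable M" using meas[OF y] by measurable
    have "closedin T {x \<in> K. AE w in M. ereal (f x w) \<le> ereal (f y w)}"
      using assms(5) eta unfolding lsc_L0_def by blast
    then have cS: "closedin T (S y)" unfolding S_def by simp
    then have op: "openin T (topspace T - S y)" by (simp add: closedin_def)
    have "x0 \<in> topspace T - S y" using x0 top nx by auto
    moreover have "eventually (\<lambda>x. x \<in> S y) F" using evF y by auto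
    ultimately have "(topspace T - S y) \<inter> S y \<noteq> {}" using cl op unfolding cluster_pt_def by blast
    then show False by auto
  qed
  then show ?thesis using x0 unfolding S_def by auto
qed

end
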